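(* Let $f:\mathbb{R}^n\to\mathbb{R}\cup\{+\infty\}$ be a polyhedral M-convex function with bounded $\operatorname{dom}_{\mathbb{R}} f$, and $x\in\operatorname{dom}_{\mathbb{R}} f$ with $\phi_{\mathbb{R}}(x)<0$. Consider the procedure PM-IncSlope$(x)$: set $y:=x$; for each $i\in N$ (each exactly once, arbitrary order) and, for this $i$, for each $j\in N\setminus\{i\}$ (each exactly once, arbitrary order), if $f'_{\mathbb{R}}(y;i,j)=\phi_{\mathbb{R}}(x)$ then replace $y$ by $y+\bar c_{\mathbb{R}}(y;i,j)(\chi_i-\chi_j)$; finally output $x':=y$. Then $\phi_{\mathbb{R}}(x')>\phi_{\mathbb{R}}(x)$.
   Context: $N=\{1,\dots,n\}$; $\chi_i$ is the $i$-th unit vector. $\operatorname{dom}_{\mathbb{R}} f=\{x\in\mathbb{R}^n:f(x)<+\infty\}$. A polyhedral convex function $f:\mathbb{R}^n\to\mathbb{R}\cup\{+\infty\}$ (epigraph a polyhedron, $\operatorname{dom}_{\mathbb{R}} f\neq\emptyset$) is M-convex if for all $x,y\in\operatorname{dom}_{\mathbb{R}} f$ and every $i$ with $x(i)>y(i)$ there exist $j$ with $x(j)<y(j)$ and $\epsilon_0>0$ such that $f(x)+f(y)\ge f(x-\epsilon(\chi_i-\chi_j))+f(y+\epsilon(\chi_i-\chi_j))$ for all $\epsilon\in[0,\epsilon_0]$. For $x\in\operatorname{dom}_{\mathbb{R}} f$, $f'_{\mathbb{R}}(x;i,j)=\lim_{\alpha\downarrow0}(f(x+\alpha(\chi_i-\chi_j))-f(x))/\alpha$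 (possibly $+\infty$), $\phi_{\mathbb{R}}(x)=\min_{i,j\in N}f'_{\mathbb{R}}(x;i,j)$, and for finite $f'_{\mathbb{R}}(x;i,j)$, $\bar c_{\mathbb{R}}(x;i,j)=\max\{\lambda\ge0: f(x+\lambda(\chi_i-\chi_j))-f(x)=\lambda f'_{\mathbb{R}}(x;i,j)\}$. *)

theory Defs
  imports "HOL-Analysis.Analysis"
begin

text \<open>Functions R^n -> R \<union> {+\<infinity>} are modelled as ereal-valued functions on
  real^'n (index set N = UNIV :: 'n set) that never take the value -\<infinity>.\<close>

definition dom_R :: "(real^'n \<Rightarrow> ereal) \<Rightarrow> (real^'n) set" where
  "dom_R f = {x. f x < \<infinity>}"

definition chi :: "'n::finite \<Rightarrow> real^'n" where
  "chi i = axis i 1"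

definition epigraph :: "(real^'n \<Rightarrow> ereal) \<Rightarrow> ((real^'n) \<times> real) set" where
  "epigraph f = {(x, t). f x \<le> ereal t}"

definition polyhedral_convex :: "(real^'n::finite \<Rightarrow> ereal) \<Rightarrow> bool" where
  "polyhedral_convex f \<longleftrightarrow> (\<forall>x. f x \<noteq> -\<infinity>) \<and> polyhedron (epigraph f) \<and> dom_R f \<noteq> {}"

definition M_convex :: "(real^'n::finite \<Rightarrow> ereal) \<Rightarrow> bool" where
  "M_convex f \<longleftrightarrow> polyhedral_convex f \<and>
     (\<forall>x\<in>dom_R f. \<forall>y\<in>dom_R f. \<forall>i. x$i > y$i \<longrightarrow>
        (\<exists>j. x$j < y$j \<and> (\<exists>\<epsilon>0>0. \<forall>\<epsilon>\<in>{0..\<epsilon>0}.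
           f x + f y \<ge> f (x - \<epsilon> *\<^sub>R (chi i - chi j)) + f (y + \<epsilon> *\<^sub>R (chi i - chi j)))))"

definition dderiv :: "(real^'n::finite \<Rightarrow> ereal) \<Rightarrow> real^'n \<Rightarrow> 'n \<Rightarrow> 'n \<Rightarrow> ereal" where
  "dderiv f x i j = Lim (at_right 0)
     (\<lambda>\<alpha>::real. (f (x + \<alpha> *\<^sub>R (chi i - chi j)) - f x) / ereal \<alpha>)"

definition phi :: "(real^'n::finite \<Rightarrow> ereal) \<Rightarrow> real^'n \<Rightarrow> ereal" where
  "phi f x = Min {dderiv f x i j | i j. True}"

definition cbar :: "(real^'n::finite \<Rightarrow> ereal) \<Rightarrow> real^'n \<Rightarrow> 'n \<Rightarrow> 'n \<Rightarrow> real" where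
  "cbar f x i j = (GREATEST lam::real. lam \<ge> 0 \<and>
       f (x + lam *\<^sub>R (chi i - chi j)) - f x = ereal lam * dderiv f x i j)"

definition pm_step :: "(real^'n::finite \<Rightarrow> ereal) \<Rightarrow> ereal \<Rightarrow> real^'n \<Rightarrow> 'n \<times> 'n \<Rightarrow> real^'n" where
  "pm_step f th y ij = (case ij of (i, j) \<Rightarrow>
     if dderiv f y i j = th then y + cbar f y i j *\<^sub>R (chi i - chi j) else y)"

definition pm_incslope :: "(real^'n::finite \<Rightarrow> ereal) \<Rightarrow> 'n list \<Rightarrow> ('n \<Rightarrow> 'n list) \<Rightarrow> real^'n \<Rightarrow> real^'n" where
  "pm_incslope f ois js x =
     foldl (pm_step f (phi f x)) x (concat (map (\<lambda>i. map (\<lambda>j. (i, j)) (js i)) ois))"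

end

theory Submission
  imports Defs
begin


lemma chi_nth[simp]: "chi i $ k = (if k = i then 1 else 0)"
  by (simp add: chi_def axis_def)

definition PP :: "((real^'n::finite) \<times> real) set \<Rightarrow> (real^'n) set" where
  "PP C0 = {x. \<forall>(a,b)\<in>C0. a \<bullet> x \<le> b}"
definition MM :: "((real^'n::finite) \<times> real) set \<Rightarrow> real^'n \<Rightarrow> real" where
  "MM C1 x = Max ((\<lambda>(a,b). a \<bullet> x + b) ` C1)"

lemma ereal_eqI_le:
  assumes "\<And>t. (u \<le> ereal t) \<longleftrightarrow> (Q \<and> M \<le> t)"
  shows "u = (if Q then ereal M else \<infinity>)"
proof (cases Q)
  case True
  have "u \<le> ereal M" using assms True by simp
  moreover have "ereal M \<le> u"
    by (rule ereal_le_real) (use assms True in auto)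
  ultimately show ?thesis using True by simp
next
  case False
  show ?thesis
  proof (cases u)
    case (real r) then show ?thesis using assms[of r] False by simp
  next
    case PInf then show ?thesis using False by simp
  next
    case MInf then show ?thesis using assms[of 0] False by simp
  qed
qed

lemma repr:
  fixes f :: "real^'n::finite \<Rightarrow> ereal"
  assumes "polyhedral_convex f"
  shows "\<exists>C0 C1. finite C0 \<and> finite C1 \<and> C1 \<noteq> {} \<and>
     (\<forall>x. f x = (if x \<in> PP C0 then ereal (MM C1 x) else \<infinity>))"
proof -
  have ninf: "\<And>x. f x \<noteq> -\<infinity>" and poly: "polyhedron (epigraph f)" and dne: "dom_R f \<noteq> {}"
    using assms unfolding polyhedral_convex_def by auto
  obtain F where F: "finite F" "epigraph f = \<Inter>F"
    and Fh: "\<forall>h\<in>F. \<exists>a b. a \<noteq> 0 \<and> h = {x. a \<bullet> x \<le> b}"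
    using poly unfolding polyhedron_def by blast
  have "\<forall>h\<in>F. \<exists>ab. h = {p. fst ab \<bullet> p \<le> snd ab}" using Fh by force
  then obtain g where g: "\<forall>h\<in>F. h = {p. fst (g h) \<bullet> p \<le> snd (g h)}" by metis
  define C where "C = g ` F"
  have finC: "finite C" using F by (simp add: C_def)
  have mem: "f x \<le> ereal t \<longleftrightarrow> (\<forall>(a,b)\<in>C. fst a \<bullet> x + snd a * t \<le> b)" for x t
  proof -
    have "f x \<le> ereal t \<longleftrightarrow> (x,t) \<in> \<Inter>F" using F(2) unfolding epigraph_def by blast
    also have "\<dots> \<longleftrightarrow> (\<forall>h\<in>F. fst (g h) \<bullet> (x,t) \<le> snd (g h))" using g by blast
    also have "\<dots> \<longleftrightarrow> (\<forall>(a,b)\<in>C. fst a \<bullet> x + snd a * t \<le> b)"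
      unfolding C_def by (simp add: inner_prod_def split_def)
    finally show ?thesis .
  qed
  obtain y where y: "f y < \<infinity>" using dne unfolding dom_R_def by auto
  then obtain r where r: "f y = ereal r" using ninf[of y] by (cases "f y") auto
  have sign: "snd a \<le> 0" if "(a,b) \<in> C" for a b
  proof (rule ccontr)
    assume "\<not> snd a \<le> 0"
    hence pos: "snd a > 0" by simp
    define t where "t = max r ((b - fst a \<bullet> y)/snd a + 1)"
    have "f y \<le> ereal t" using r by (simp add: t_def)
    hence le: "fst a \<bullet> y + snd a * t \<le> b" using mem that by fastforce
    have "snd a * t \<ge> snd a * ((b - fst a \<bullet> y)/snd a + 1)"
      using pos by (intro mult_left_mono) (auto simp: t_def)
    also have "snd a * ((b - fst a \<bullet> y)/snd a + 1) = b - fst a \<bullet> y + snd a"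
      using pos by (simp add: field_simps)
    finally show False using le pos by linarith
  qed
  define C0 where "C0 = (\<lambda>(a,b). (fst a, b)) ` {(a,b)\<in>C. snd a = 0}"
  define C1 where "C1 = (\<lambda>(a,b). (scaleR (-1/snd a) (fst a), b / snd a)) ` {(a,b)\<in>C. snd a < 0}"
  have finC0: "finite C0" "finite C1" unfolding C0_def C1_def by (intro finite_imageI finite_subset[OF _ finC]; auto)+
  have key: "fst a \<bullet> x + snd a * t \<le> b \<longleftrightarrow> scaleR (-1/snd a) (fst a) \<bullet> x + b / snd a \<le> t"
    if "snd a < 0" for a :: "(real^'n) \<times> real" and b x t
  proof -
    have "fst a \<bullet> x + snd a * t \<le> b \<longleftrightarrow> (b - fst a \<bullet> x) / snd a \<le> t"
      using that by (simp add: divide_le_eq algebra_simps)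
    also have "(b - fst a \<bullet> x) / snd a = scaleR (-1/snd a) (fst a) \<bullet> x + b / snd a"
      by (simp add: field_simps add_divide_distrib[symmetric])
    finally show ?thesis .
  qed
  have mem2: "f x \<le> ereal t \<longleftrightarrow> x \<in> PP C0 \<and> (\<forall>(a,b)\<in>C1. a \<bullet> x + b \<le> t)" for x t
  proof -
    have "f x \<le> ereal t \<longleftrightarrow> (\<forall>(a,b)\<in>C. fst a \<bullet> x + snd a * t \<le> b)" by (rule mem)
    also have "\<dots> \<longleftrightarrow> (\<forall>(a,b)\<in>C. snd a = 0 \<longrightarrow> fst a \<bullet> x \<le> b) \<and>
                        (\<forall>(a,b)\<in>C. snd a < 0 \<longrightarrow> fst a \<bullet> x + snd a * t \<le> b)"
      using sign by (force)
    also have "\<dots> \<longleftrightarrow> x \<in> PP C0 \<and> (\<forall>(a,b)\<in>C1. a \<bullet> x + b \<le> t)"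
      unfolding PP_def C0_def C1_def using key by (auto split: prod.splits)
    finally show ?thesis .
  qed
  have ne: "C1 \<noteq> {}"
  proof
    assume e: "C1 = {}"
    have "y \<in> PP C0" using mem2[of y r] r by simp
    hence "\<And>t. f y \<le> ereal t" using mem2 e by simp
    hence "f y = -\<infinity>" by (rule ereal_bot)
    thus False using ninf by simp
  qed
  have "f x = (if x \<in> PP C0 then ereal (MM C1 x) else \<infinity>)" for x
    by (rule ereal_eqI_le) (simp add: mem2 MM_def finC0 ne Max_le_iff split_def)
  thus ?thesis using finC0 ne by blast
qed



lemma max_aff:
  fixes A :: "(real \<times> real) set"
  assumes "finite A" "A \<noteq> {}"
  shows "\<exists>\<delta>>0. \<exists>s. \<forall>\<alpha>\<in>{0..\<delta>}. Max ((\<lambda>(p,q). p + q*\<alpha>) ` A) = Max (fst ` A) + \<alpha> * s"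
  using assms
proof (induction A rule: finite_ne_induct)
  case (singleton x)
  show ?case by (rule exI[of _ 1]) (auto simp: split_def intro!: exI[of _ "snd x"])
next
  case (insert x A)
  obtain p q where x: "x = (p,q)" by (cases x)
  obtain \<delta> s where d: "\<delta> > 0" and IH: "\<And>\<alpha>. \<alpha>\<in>{0..\<delta>} \<Longrightarrow> Max ((\<lambda>(p,q). p + q*\<alpha>) ` A) = Max (fst ` A) + \<alpha> * s"
    using insert.IH by blast
  define m0 where "m0 = Max (fst ` A)"
  have MI: "Max ((\<lambda>(p,q). p + q*\<alpha>) ` insert x A) = max (p + q*\<alpha>) (Max ((\<lambda>(p,q). p + q*\<alpha>) ` A))" for \<alpha>
    using insert x by (simp add: Max_insert)
  have MF: "Max (fst ` insert x A) = max p m0" using insert x by (simp add: Max_insert m0_def)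
  consider "p > m0" | "p < m0" | "p = m0" by linarith
  then show ?case
  proof cases
    case 1
    define \<delta>' where "\<delta>' = min \<delta> ((p - m0) / (\<bar>q - s\<bar> + 1))"
    have "\<delta>' > 0" using 1 d by (simp add: \<delta>'_def)
    moreover have "Max ((\<lambda>(p,q). p + q*\<alpha>) ` insert x A) = Max (fst ` insert x A) + \<alpha> * q"
      if a: "\<alpha> \<in> {0..\<delta>'}" for \<alpha>
    proof -
      have a1: "\<alpha> \<in> {0..\<delta>}" using a by (simp add: \<delta>'_def)
      have "\<alpha> * \<bar>q - s\<bar> \<le> (p - m0) / (\<bar>q - s\<bar> + 1) * \<bar>q - s\<bar>"
        using a by (intro mult_right_mono) (auto simp: \<delta>'_def)
      also have "\<dots> \<le> p - m0" using 1
        by (simp add: divide_le_eq field_simps mult_left_mono)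
      finally have "\<alpha> * (s - q) \<le> p - m0"
        using a by (smt (verit) abs_ge_self atLeastAtMost_iff minus_diff_eq abs_minus_commute mult_left_mono)
      thus ?thesis unfolding MI MF IH[OF a1] m0_def[symmetric] using 1 by (simp add: max_def algebra_simps)
    qed
    ultimately show ?thesis by blast
  next
    case 2
    define \<delta>' where "\<delta>' = min \<delta> ((m0 - p) / (\<bar>q - s\<bar> + 1))"
    have "\<delta>' > 0" using 2 d by (simp add: \<delta>'_def)
    moreover have "Max ((\<lambda>(p,q). p + q*\<alpha>) ` insert x A) = Max (fst ` insert x A) + \<alpha> * s"
      if a: "\<alpha> \<in> {0..\<delta>'}" for \<alpha>
    proof -
      have a1: "\<alpha> \<in> {0..\<delta>}" using a by (simp add: \<delta>'_def)
      have "\<alpha> * \<bar>q - s\<bar> \<le> (m0 - p) / (\<bar>q - s\<bar> + 1) * \<bar>q - s\<bar>"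
        using a by (intro mult_right_mono) (auto simp: \<delta>'_def)
      also have "\<dots> \<le> m0 - p" using 2
        by (simp add: divide_le_eq field_simps mult_left_mono)
      finally have "\<alpha> * (q - s) \<le> m0 - p"
        using a by (smt (verit) abs_ge_self atLeastAtMost_iff mult_left_mono)
      thus ?thesis unfolding MI MF IH[OF a1] m0_def[symmetric] using 2 by (simp add: max_def algebra_simps)
    qed
    ultimately show ?thesis by blast
  next
    case 3
    have "Max ((\<lambda>(p,q). p + q*\<alpha>) ` insert x A) = Max (fst ` insert x A) + \<alpha> * max q s"
      if a: "\<alpha> \<in> {0..\<delta>}" for \<alpha>
    proof -
      have "max (p + q*\<alpha>) (p + s*\<alpha>) = p + \<alpha> * max q s"
      proof (cases "q \<le> s")
        case True
        hence "q*\<alpha> \<le> s*\<alpha>" using a by (simp add: mult_right_mono)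
        thus ?thesis using True by (simp add: max_def mult.commute)
      next
        case False
        hence "s*\<alpha> \<le> q*\<alpha>" using a by (simp add: mult_right_mono)
        thus ?thesis using False by (simp add: max_def mult.commute)
      qed
      thus ?thesis unfolding MI MF IH[OF a] m0_def[symmetric] using 3 by (simp add: algebra_simps)
    qed
    thus ?thesis using d by blast
  qed
qed

lemma MM_conv:
  assumes "finite C1" "C1 \<noteq> {}" "0 \<le> t" "t \<le> 1"
  shows "MM C1 ((1-t) *\<^sub>R u + t *\<^sub>R v) \<le> (1-t) * MM C1 u + t * MM C1 v"
  unfolding MM_def
proof (rule Max.boundedI)
  show "finite ((\<lambda>(a, b). a \<bullet> ((1 - t) *\<^sub>R u + t *\<^sub>R v) + b) ` C1)" using assms by simp
  show "(\<lambda>(a, b). a \<bullet> ((1 - t) *\<^sub>R u + t *\<^sub>R v) + b) ` C1 \<noteq> {}" using assms by simp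
  fix y assume "y \<in> (\<lambda>(a, b). a \<bullet> ((1 - t) *\<^sub>R u + t *\<^sub>R v) + b) ` C1"
  then obtain a b where ab: "(a,b) \<in> C1" "y = a \<bullet> ((1 - t) *\<^sub>R u + t *\<^sub>R v) + b" by auto
  have y: "y = (1-t) * (a \<bullet> u + b) + t * (a \<bullet> v + b)" using ab by (simp add: inner_add_right algebra_simps)
  have "a \<bullet> u + b \<le> Max ((\<lambda>(a, b). a \<bullet> u + b) ` C1)" using ab assms by (intro Max_ge) auto
  moreover have "a \<bullet> v + b \<le> Max ((\<lambda>(a, b). a \<bullet> v + b) ` C1)" using ab assms by (intro Max_ge) auto
  ultimately show "y \<le> (1 - t) * Max ((\<lambda>(a, b). a \<bullet> u + b) ` C1) + t * Max ((\<lambda>(a, b). a \<bullet> v + b) ` C1)"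
    unfolding y using assms by (intro add_mono mult_left_mono) auto
qed

lemma PP_conv:
  assumes "u \<in> PP C0" "v \<in> PP C0" "0 \<le> t" "t \<le> 1"
  shows "(1-t) *\<^sub>R u + t *\<^sub>R v \<in> PP C0"
  unfolding PP_def
proof (clarify)
  fix a b assume ab: "(a,b) \<in> C0"
  have "a \<bullet> u \<le> b" "a \<bullet> v \<le> b" using assms ab unfolding PP_def by auto
  hence "(1-t) * (a \<bullet> u) + t * (a \<bullet> v) \<le> (1-t) * b + t * b"
    using assms by (intro add_mono mult_left_mono) auto
  thus "a \<bullet> ((1 - t) *\<^sub>R u + t *\<^sub>R v) \<le> b" by (simp add: inner_add_right algebra_simps)
qed

lemma line_pl:
  assumes "finite C0" "finite C1" "C1 \<noteq> {}" "x \<in> PP C0"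
  shows "(\<forall>\<alpha>>0. x + \<alpha> *\<^sub>R d \<notin> PP C0) \<or>
    (\<exists>\<delta>>0. \<exists>s. \<forall>\<alpha>\<in>{0..\<delta>}. x + \<alpha> *\<^sub>R d \<in> PP C0 \<and> MM C1 (x + \<alpha> *\<^sub>R d) = MM C1 x + \<alpha> * s)"
proof (cases "\<exists>(a,b)\<in>C0. a \<bullet> x = b \<and> a \<bullet> d > 0")
  case True
  then obtain a b where ab: "(a,b)\<in>C0" "a \<bullet> x = b" "a \<bullet> d > 0" by auto
  have "x + \<alpha> *\<^sub>R d \<notin> PP C0" if "\<alpha> > 0" for \<alpha>
  proof
    assume "x + \<alpha> *\<^sub>R d \<in> PP C0"
    hence "a \<bullet> (x + \<alpha> *\<^sub>R d) \<le> b" using ab unfolding PP_def by auto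
    thus False using ab mult_pos_pos[OF that ab(3)] by (simp add: inner_add_right)
  qed
  thus ?thesis by blast
next
  case False
  define g where "g = (\<lambda>(a::real^'a, b::real). if a \<bullet> d \<le> 0 then 1 else (b - a \<bullet> x) / (a \<bullet> d))"
  define \<delta>0 where "\<delta>0 = Min (insert 1 (g ` C0))"
  have gpos: "g ab > 0" if "ab \<in> C0" for ab
  proof -
    obtain a b where ab: "ab = (a,b)" by (cases ab)
    have "a \<bullet> x \<le> b" using assms(4) that ab unfolding PP_def by auto
    moreover have "a \<bullet> d > 0 \<Longrightarrow> a \<bullet> x \<noteq> b" using False that ab by force
    ultimately show ?thesis using ab by (auto simp: g_def)
  qed
  have d0: "\<delta>0 > 0" unfolding \<delta>0_def using assms gpos by (subst Min_gr_iff) auto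
  have inP: "x + \<alpha> *\<^sub>R d \<in> PP C0" if "\<alpha> \<in> {0..\<delta>0}" for \<alpha>
    unfolding PP_def
  proof clarify
    fix a b assume ab: "(a,b) \<in> C0"
    have ax: "a \<bullet> x \<le> b" using assms(4) ab unfolding PP_def by auto
    have "\<alpha> \<le> g (a,b)" using that ab assms(1) unfolding \<delta>0_def by (auto intro: order.trans[OF _ Min_le])
    show "a \<bullet> (x + \<alpha> *\<^sub>R d) \<le> b"
    proof (cases "a \<bullet> d \<le> 0")
      case True
      hence "\<alpha> * (a \<bullet> d) \<le> 0" using that by (simp add: mult_nonneg_nonpos)
      thus ?thesis using ax by (simp add: inner_add_right)
    next
      case F: False
      hence "\<alpha> \<le> (b - a \<bullet> x) / (a \<bullet> d)" using \<open>\<alpha> \<le> g (a,b)\<close> by (simp add: g_def)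
      hence "\<alpha> * (a \<bullet> d) \<le> b - a \<bullet> x" using F by (simp add: le_divide_eq)
      thus ?thesis by (simp add: inner_add_right)
    qed
  qed
  define A where "A = (\<lambda>(a,b). (a \<bullet> x + b, a \<bullet> d)) ` C1"
  have "finite A" "A \<noteq> {}" using assms by (auto simp: A_def)
  from max_aff[OF this] obtain \<delta>1 s where d1: "\<delta>1 > 0"
    and M: "\<And>\<alpha>. \<alpha>\<in>{0..\<delta>1} \<Longrightarrow> Max ((\<lambda>(p,q). p + q*\<alpha>) ` A) = Max (fst ` A) + \<alpha> * s" by blast
  have MMe: "MM C1 (x + \<alpha> *\<^sub>R d) = Max ((\<lambda>(p,q). p + q*\<alpha>) ` A)" for \<alpha>
    unfolding MM_def A_def image_image by (intro arg_cong[where f=Max] image_cong) (auto simp: inner_add_right algebra_simps split: prod.splits)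
  have MMx: "MM C1 x = Max (fst ` A)"
    unfolding MM_def A_def image_image by (intro arg_cong[where f=Max] image_cong) (auto split: prod.splits)
  have "\<forall>\<alpha>\<in>{0..min \<delta>0 \<delta>1}. x + \<alpha> *\<^sub>R d \<in> PP C0 \<and> MM C1 (x + \<alpha> *\<^sub>R d) = MM C1 x + \<alpha> * s"
    using inP M MMe MMx by auto
  moreover have "min \<delta>0 \<delta>1 > 0" using d0 d1 by simp
  ultimately show ?thesis by blast
qed




definition DDv :: "(real^'n::finite \<Rightarrow> ereal) \<Rightarrow> real^'n \<Rightarrow> real^'n \<Rightarrow> ereal" where
  "DDv f x d = Lim (at_right 0) (\<lambda>\<alpha>::real. (f (x + \<alpha> *\<^sub>R d) - f x) / ereal \<alpha>)"

lemma dderiv_DDv: "dderiv f x i j = DDv f x (chi i - chi j)"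
  by (simp add: dderiv_def DDv_def)

locale mset =
  fixes f :: "real^'n::finite \<Rightarrow> ereal" and C0 C1 :: "((real^'n) \<times> real) set"
  assumes fin0: "finite C0" and fin1: "finite C1" and ne1: "C1 \<noteq> {}"
    and rep: "\<And>x. f x = (if x \<in> PP C0 then ereal (MM C1 x) else \<infinity>)"
begin

lemma f_in: "x \<in> PP C0 \<Longrightarrow> f x = ereal (MM C1 x)" using rep by simp
lemma f_out: "x \<notin> PP C0 \<Longrightarrow> f x = \<infinity>" using rep by simp
lemma dom_eq: "dom_R f = PP C0" unfolding dom_R_def using rep by auto

lemma DD:
  assumes x: "x \<in> PP C0"
  shows "(DDv f x d = \<infinity> \<and> (\<forall>\<alpha>>0. f (x + \<alpha> *\<^sub>R d) = \<infinity>)) \<or>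
     (\<exists>s \<delta>. \<delta> > 0 \<and> DDv f x d = ereal s \<and>
        (\<forall>\<alpha>\<in>{0..\<delta>}. f (x + \<alpha> *\<^sub>R d) = ereal (MM C1 x + \<alpha> * s)) \<and>
        (\<forall>\<alpha>\<ge>0. ereal (MM C1 x + \<alpha> * s) \<le> f (x + \<alpha> *\<^sub>R d)))"
proof -
  have nb: "at_right (0::real) \<noteq> bot" by simp
  from line_pl[OF fin0 fin1 ne1 x, of d] show ?thesis
  proof
    assume A: "\<forall>\<alpha>>0. x + \<alpha> *\<^sub>R d \<notin> PP C0"
    hence fA: "\<forall>\<alpha>>0. f (x + \<alpha> *\<^sub>R d) = \<infinity>" using f_out by auto
    have "eventually (\<lambda>\<alpha>::real. (f (x + \<alpha> *\<^sub>R d) - f x) / ereal \<alpha> = \<infinity>) (at_right 0)"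
      unfolding eventually_at_right_field
      by (rule exI[of _ 1]) (auto simp: fA f_in[OF x])
    hence "DDv f x d = \<infinity>" unfolding DDv_def by (intro tendsto_Lim[OF nb] tendsto_eventually)
    thus ?thesis using fA by blast
  next
    assume "\<exists>\<delta>>0. \<exists>s. \<forall>\<alpha>\<in>{0..\<delta>}. x + \<alpha> *\<^sub>R d \<in> PP C0 \<and> MM C1 (x + \<alpha> *\<^sub>R d) = MM C1 x + \<alpha> * s"
    then obtain \<delta> s where d: "\<delta> > 0" and B: "\<And>\<alpha>. \<alpha>\<in>{0..\<delta>} \<Longrightarrow> x + \<alpha> *\<^sub>R d \<in> PP C0 \<and> MM C1 (x + \<alpha> *\<^sub>R d) = MM C1 x + \<alpha> * s"
      by blast
    have fB: "f (x + \<alpha> *\<^sub>R d) = ereal (MM C1 x + \<alpha> * s)" if "\<alpha>\<in>{0..\<delta>}" for \<alpha>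
      using B[OF that] f_in by simp
    have "eventually (\<lambda>\<alpha>::real. (f (x + \<alpha> *\<^sub>R d) - f x) / ereal \<alpha> = ereal s) (at_right 0)"
      unfolding eventually_at_right_field
    proof (rule exI[of _ \<delta>], intro conjI allI impI)
      fix \<alpha> :: real assume "0 < \<alpha>" "\<alpha> < \<delta>"
      hence "f (x + \<alpha> *\<^sub>R d) = ereal (MM C1 x + \<alpha> * s)" using fB by simp
      thus "(f (x + \<alpha> *\<^sub>R d) - f x) / ereal \<alpha> = ereal s" using \<open>0 < \<alpha>\<close> f_in[OF x] by simp
    qed (use d in simp)
    hence DV: "DDv f x d = ereal s" unfolding DDv_def by (intro tendsto_Lim[OF nb] tendsto_eventually)
    have conv: "ereal (MM C1 x + \<alpha> * s) \<le> f (x + \<alpha> *\<^sub>R d)" if a: "\<alpha> \<ge> 0" for \<alpha>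
    proof (cases "x + \<alpha> *\<^sub>R d \<in> PP C0")
      case False thus ?thesis using f_out by simp
    next
      case True
      show ?thesis
      proof (cases "\<alpha> = 0")
        case True thus ?thesis using f_in[OF x] by simp
      next
        case False
        hence ap: "\<alpha> > 0" using a by simp
        define t where "t = min 1 (\<delta>/\<alpha>)"
        have t: "0 < t" "t \<le> 1" "t * \<alpha> \<le> \<delta>" using ap d
          by (auto simp: t_def min_def field_simps)
        have "MM C1 x + (t*\<alpha>) * s = MM C1 (x + (t*\<alpha>) *\<^sub>R d)" using B[of "t*\<alpha>"] t ap by simp
        also have "x + (t*\<alpha>) *\<^sub>R d = (1-t) *\<^sub>R x + t *\<^sub>R (x + \<alpha> *\<^sub>R d)" by (simp add: algebra_simps)
        also have "MM C1 \<dots> \<le> (1-t) * MM C1 x + t * MM C1 (x + \<alpha> *\<^sub>R d)"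
          using t by (intro MM_conv fin1 ne1) auto
        finally have "t * (\<alpha> * s) \<le> t * (MM C1 (x + \<alpha> *\<^sub>R d) - MM C1 x)" by (simp add: algebra_simps)
        hence "\<alpha> * s \<le> MM C1 (x + \<alpha> *\<^sub>R d) - MM C1 x" using t(1) by simp
        thus ?thesis using f_in[OF True] by simp
      qed
    qed
    show ?thesis using d DV fB conv by blast
  qed
qed

end



definition n1 :: "real^'n::finite \<Rightarrow> real" where "n1 v = (\<Sum>i\<in>UNIV. \<bar>v$i\<bar>)"

lemma sum_two:
  fixes g h :: "'n::finite \<Rightarrow> real"
  assumes "a \<noteq> b" "\<And>k. k \<noteq> a \<Longrightarrow> k \<noteq> b \<Longrightarrow> g k = h k"
  shows "sum g UNIV = sum h UNIV + (g a - h a) + (g b - h b)"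
proof -
  have s: "sum u UNIV = u a + u b + sum u (UNIV - {a} - {b})" for u :: "'n \<Rightarrow> real"
  proof -
    have "sum u UNIV = u a + sum u (UNIV - {a})" by (simp add: sum.remove)
    also have "sum u (UNIV - {a}) = u b + sum u (UNIV - {a} - {b})"
      using assms(1) by (subst sum.remove[of _ b]) auto
    finally show ?thesis by simp
  qed
  have "sum g (UNIV - {a} - {b}) = sum h (UNIV - {a} - {b})" using assms(2) by (intro sum.cong) auto
  thus ?thesis using s[of g] s[of h] by simp
qed

lemma closed_PP: "closed (PP C0)"
proof -
  have "PP C0 = (\<Inter>ab\<in>C0. {x. fst ab \<bullet> x \<le> snd ab})" unfolding PP_def by fastforce
  thus ?thesis by (auto intro!: closed_INT closed_halfspace_le)
qed

lemma MM_le_iff: "finite C1 \<Longrightarrow> C1 \<noteq> {} \<Longrightarrow> MM C1 w \<le> c \<longleftrightarrow> (\<forall>ab\<in>C1. fst ab \<bullet> w + snd ab \<le> c)"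
  unfolding MM_def by (auto simp: split_def)

locale msetM = mset +
  assumes mconv: "M_convex f"
begin

lemma exch:
  assumes "x \<in> PP C0" "y \<in> PP C0" "x$i > y$i"
  shows "\<exists>j. x$j < y$j \<and> (\<exists>\<epsilon>0>0. \<forall>\<epsilon>\<in>{0..\<epsilon>0}.
           f x + f y \<ge> f (x - \<epsilon> *\<^sub>R (chi i - chi j)) + f (y + \<epsilon> *\<^sub>R (chi i - chi j)))"
  using mconv assms unfolding M_convex_def dom_eq by blast

lemma K1:
  assumes y: "y \<in> PP C0" and ph: "ph \<le> 0"
    and H: "\<And>a b \<alpha>. \<alpha> \<ge> 0 \<Longrightarrow> ereal (MM C1 y + \<alpha>*ph) \<le> f (y + \<alpha> *\<^sub>R (chi a - chi b))"
  shows "ereal (MM C1 y + ph * n1 (z - y) / 2) \<le> f z"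
proof (cases "z \<in> PP C0")
  case False thus ?thesis using f_out by simp
next
  case zP: True
  define rz where "rz = MM C1 z"
  define lo where "lo = (\<chi> i. min (y$i) (z$i))"
  define hi where "hi = (\<chi> i. max (y$i) (z$i))"
  define B where "B = {w. w \<in> cbox lo hi \<and> w \<in> PP C0 \<and> MM C1 w + ph * n1 (z - w) / 2 \<le> rz}"
  have Beq: "B = cbox lo hi \<inter> PP C0 \<inter> (\<Inter>ab\<in>C1. {w. fst ab \<bullet> w + snd ab + ph * n1 (z - w) / 2 \<le> rz})"
  proof -
    have key: "MM C1 w + g \<le> rz \<longleftrightarrow> (\<forall>ab\<in>C1. fst ab \<bullet> w + snd ab + g \<le> rz)" for w g
    proof -
      have "MM C1 w + g \<le> rz \<longleftrightarrow> MM C1 w \<le> rz - g" by linarith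
      also have "\<dots> \<longleftrightarrow> (\<forall>ab\<in>C1. fst ab \<bullet> w + snd ab \<le> rz - g)" by (rule MM_le_iff[OF fin1 ne1])
      also have "\<dots> \<longleftrightarrow> (\<forall>ab\<in>C1. fst ab \<bullet> w + snd ab + g \<le> rz)" by (simp add: le_diff_eq)
      finally show ?thesis .
    qed
    show ?thesis unfolding B_def using key by blast
  qed
  have "closed B" unfolding Beq unfolding n1_def
    by (intro closed_Int closed_cbox closed_PP closed_INT ballI closed_Collect_le continuous_intros) auto
  moreover have "bounded B" unfolding B_def by (rule bounded_subset[OF bounded_cbox]) auto
  ultimately have cB: "compact B" by (simp add: compact_eq_bounded_closed)
  have zB: "z \<in> B" unfolding B_def using zP by (auto simp: mem_box_cart lo_def hi_def n1_def rz_def)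
  have "continuous_on B (\<lambda>w. n1 (w - y))" unfolding n1_def by (intro continuous_intros)
  from continuous_attains_inf[OF cB _ this] zB obtain w where wB: "w \<in> B"
    and wmin: "\<And>w'. w' \<in> B \<Longrightarrow> n1 (w - y) \<le> n1 (w' - y)" by blast
  have wP: "w \<in> PP C0" and wbox: "\<And>k. lo$k \<le> w$k \<and> w$k \<le> hi$k"
    and wle: "MM C1 w + ph * n1 (z - w) / 2 \<le> rz" using wB unfolding B_def mem_box_cart by auto
  have "w = y"
  proof (rule ccontr)
    assume "w \<noteq> y"
    then obtain i0 where "w$i0 \<noteq> y$i0" by (auto simp: vec_eq_iff)
    show False
    proof (cases "\<exists>i. w$i > y$i")
      case False
      hence "w$i0 < y$i0" using \<open>w$i0 \<noteq> y$i0\<close> by (meson linorder_neqE_linordered_idom)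
      from exch[OF y wP this] obtain j where "y$j < w$j" by blast
      thus False using False by blast
    next
      case True
      then obtain i where wi: "w$i > y$i" by blast
      from exch[OF wP y wi] obtain j \<epsilon>0 where wj: "w$j < y$j" and e0: "\<epsilon>0 > 0"
        and ex: "\<And>\<epsilon>. \<epsilon>\<in>{0..\<epsilon>0} \<Longrightarrow> f w + f y \<ge> f (w - \<epsilon> *\<^sub>R (chi i - chi j)) + f (y + \<epsilon> *\<^sub>R (chi i - chi j))"
        by blast
      have ij: "i \<noteq> j" using wi wj by auto
      define \<epsilon> where "\<epsilon> = min \<epsilon>0 (min (w$i - y$i) (y$j - w$j))"
      have ep: "\<epsilon> > 0" "\<epsilon> \<le> \<epsilon>0" "\<epsilon> \<le> w$i - y$i" "\<epsilon> \<le> y$j - w$j" using e0 wi wj by (auto simp: \<epsilon>_def)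
      define w' where "w' = w - \<epsilon> *\<^sub>R (chi i - chi j)"
      have w'c: "w'$k = (if k = i then w$k - \<epsilon> else if k = j then w$k + \<epsilon> else w$k)" for k
        using ij by (auto simp: w'_def)
      have ex1: "f w' + f (y + \<epsilon> *\<^sub>R (chi i - chi j)) \<le> ereal (MM C1 w + MM C1 y)"
        using ex[of \<epsilon>] ep f_in[OF wP] f_in[OF y] by (simp add: w'_def)
      have H1: "ereal (MM C1 y + \<epsilon>*ph) \<le> f (y + \<epsilon> *\<^sub>R (chi i - chi j))" using H ep by simp
      have w'P: "w' \<in> PP C0"
      proof (rule ccontr)
        assume "w' \<notin> PP C0"
        hence "f w' = \<infinity>" by (rule f_out)
        moreover have "f (y + \<epsilon> *\<^sub>R (chi i - chi j)) \<noteq> -\<infinity>" using H1 by auto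
        ultimately show False using ex1 by simp
      qed
      have "ereal (MM C1 w') + ereal (MM C1 y + \<epsilon>*ph) \<le> ereal (MM C1 w + MM C1 y)"
        using ex1 H1 f_in[OF w'P] by (metis add_left_mono order.trans)
      hence Mw': "MM C1 w' \<le> MM C1 w - \<epsilon>*ph" by simp
      have wiz: "w$i \<le> z$i" using wbox[of i] wi by (auto simp: hi_def)
      have wjz: "z$j \<le> w$j" using wbox[of j] wj by (auto simp: lo_def)
      have nz: "n1 (z - w') = n1 (z - w) + 2*\<epsilon>"
        unfolding n1_def
        by (subst sum_two[OF ij, where h="\<lambda>k. \<bar>(z - w)$k\<bar>"]) (use wiz wjz ep in \<open>auto simp: w'c\<close>)
      have ny: "n1 (w' - y) = n1 (w - y) - 2*\<epsilon>"
        unfolding n1_def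
        by (subst sum_two[OF ij, where h="\<lambda>k. \<bar>(w - y)$k\<bar>"]) (use wi wj ep in \<open>auto simp: w'c\<close>)
      have "w' \<in> B" unfolding B_def mem_box_cart
      proof (intro CollectI conjI allI w'P)
        fix k
        show "lo$k \<le> w'$k" "w'$k \<le> hi$k" using wbox[of k] ep
          by (auto simp: w'c lo_def hi_def)
        have "MM C1 w' + ph * n1 (z - w') / 2 \<le> MM C1 w - \<epsilon>*ph + ph * (n1 (z - w) + 2*\<epsilon>) / 2"
          using Mw' nz by simp
        also have "\<dots> = MM C1 w + ph * n1 (z - w) / 2" by (simp add: algebra_simps)
        finally show "MM C1 w' + ph * n1 (z - w') / 2 \<le> rz" using wle by simp
      qed
      from wmin[OF this] ny ep show False by simp
    qed
  qed
  with wB have "MM C1 y + ph * n1 (z - y) / 2 \<le> rz" unfolding B_def by simp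
  thus ?thesis using f_in[OF zP] by (simp add: rz_def)
qed

end



lemma n1_add: "n1 (u + v) \<le> n1 u + n1 v"
  unfolding n1_def sum.distrib[symmetric] by (intro sum_mono) (simp add: abs_triangle_ineq)

lemma n1_e: "n1 (t *\<^sub>R (chi k - chi l)) \<le> 2 * \<bar>t\<bar>"
proof -
  have "n1 (t *\<^sub>R (chi k - chi l)) \<le> (\<Sum>i\<in>UNIV. \<bar>t\<bar> * ((if i = k then 1 else 0) + (if i = l then 1 else 0)))"
    unfolding n1_def by (intro sum_mono) (auto simp: abs_mult)
  also have "\<dots> = 2 * \<bar>t\<bar>" by (simp add: sum_distrib_left[symmetric] sum.distrib)
  finally show ?thesis .
qed

context msetM
begin

definition ge :: "real^'a \<Rightarrow> real \<Rightarrow> bool" where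
  "ge y ph \<longleftrightarrow> y \<in> PP C0 \<and> (\<forall>k l. ereal ph \<le> dderiv f y k l)"

lemma dd_self: assumes "y \<in> PP C0" shows "dderiv f y a a = 0"
proof -
  from DD[OF assms, of "chi a - chi a"] show ?thesis
  proof
    assume "DDv f y (chi a - chi a) = \<infinity> \<and> (\<forall>\<alpha>>0. f (y + \<alpha> *\<^sub>R (chi a - chi a)) = \<infinity>)"
    hence "f y = \<infinity>" by (metis add.right_neutral diff_self scaleR_zero_right zero_less_one)
    thus ?thesis using f_in[OF assms] by simp
  next
    assume "\<exists>s \<delta>. \<delta> > 0 \<and> DDv f y (chi a - chi a) = ereal s \<and>
        (\<forall>\<alpha>\<in>{0..\<delta>}. f (y + \<alpha> *\<^sub>R (chi a - chi a)) = ereal (MM C1 y + \<alpha> * s)) \<and>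
        (\<forall>\<alpha>\<ge>0. ereal (MM C1 y + \<alpha> * s) \<le> f (y + \<alpha> *\<^sub>R (chi a - chi a)))"
    then obtain s \<delta> where "\<delta> > 0" "DDv f y (chi a - chi a) = ereal s"
      "f y = ereal (MM C1 y + \<delta> * s)" by fastforce
    thus ?thesis using f_in[OF assms] by (simp add: dderiv_DDv)
  qed
qed

lemma ge_H:
  assumes "ge y ph" "\<alpha> \<ge> 0"
  shows "ereal (MM C1 y + \<alpha>*ph) \<le> f (y + \<alpha> *\<^sub>R (chi a - chi b))"
proof -
  have y: "y \<in> PP C0" and D: "ereal ph \<le> DDv f y (chi a - chi b)" using assms by (auto simp: ge_def dderiv_DDv)
  from DD[OF y, of "chi a - chi b"] show ?thesis
  proof
    assume A: "DDv f y (chi a - chi b) = \<infinity> \<and> (\<forall>\<alpha>>0. f (y + \<alpha> *\<^sub>R (chi a - chi b)) = \<infinity>)"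
    show ?thesis
    proof (cases "\<alpha> = 0")
      case True thus ?thesis using f_in[OF y] by simp
    next
      case False thus ?thesis using A assms(2) by simp
    qed
  next
    assume "\<exists>s \<delta>. \<delta> > 0 \<and> DDv f y (chi a - chi b) = ereal s \<and>
        (\<forall>\<alpha>\<in>{0..\<delta>}. f (y + \<alpha> *\<^sub>R (chi a - chi b)) = ereal (MM C1 y + \<alpha> * s)) \<and>
        (\<forall>\<alpha>\<ge>0. ereal (MM C1 y + \<alpha> * s) \<le> f (y + \<alpha> *\<^sub>R (chi a - chi b)))"
    then obtain s where s: "DDv f y (chi a - chi b) = ereal s"
      "ereal (MM C1 y + \<alpha> * s) \<le> f (y + \<alpha> *\<^sub>R (chi a - chi b))" using assms(2) by blast
    have "ph \<le> s" using D s by simp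
    hence "MM C1 y + \<alpha>*ph \<le> MM C1 y + \<alpha> * s" using assms(2) by (simp add: mult_left_mono)
    thus ?thesis using s(2) by (metis ereal_less_eq(3) order.trans)
  qed
qed

lemma K1':
  assumes "ge y ph" "ph \<le> 0"
  shows "ereal (MM C1 y + ph * n1 (z - y) / 2) \<le> f z"
  using K1[of y ph z] ge_H[OF assms(1)] assms by (auto simp: ge_def)

lemma Core:
  assumes g: "ge y ph" and ph: "ph \<le> 0" and za: "z$a > y$a" and zb: "z$b < y$b"
    and Dab: "dderiv f y a b > ereal ph" and e0: "\<epsilon>0 > 0"
    and ex: "\<And>\<epsilon>. \<epsilon>\<in>{0..\<epsilon>0} \<Longrightarrow> f z + f y \<ge> f (z - \<epsilon> *\<^sub>R (chi a - chi b)) + f (y + \<epsilon> *\<^sub>R (chi a - chi b))"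
  shows "ereal (MM C1 y + ph * n1 (z - y) / 2) < f z"
proof (cases "z \<in> PP C0")
  case False thus ?thesis using f_out by simp
next
  case zP: True
  have y: "y \<in> PP C0" using g by (simp add: ge_def)
  have ab: "a \<noteq> b" using za zb by auto
  have fsum: "f z + f y = ereal (MM C1 z + MM C1 y)" using f_in[OF zP] f_in[OF y] by simp
  have ninf: "f u \<noteq> -\<infinity>" for u using rep[of u] by auto
  from DD[OF y, of "chi a - chi b"] show ?thesis
  proof
    assume A: "DDv f y (chi a - chi b) = \<infinity> \<and> (\<forall>\<alpha>>0. f (y + \<alpha> *\<^sub>R (chi a - chi b)) = \<infinity>)"
    have "f z + f y \<ge> f (z - \<epsilon>0 *\<^sub>R (chi a - chi b)) + \<infinity>" using ex[of \<epsilon>0] A e0 by simp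
    hence "f z + f y = \<infinity>" using ninf[of "z - \<epsilon>0 *\<^sub>R (chi a - chi b)"] by simp
    thus ?thesis using fsum by simp
  next
    assume "\<exists>s \<delta>. \<delta> > 0 \<and> DDv f y (chi a - chi b) = ereal s \<and>
        (\<forall>\<alpha>\<in>{0..\<delta>}. f (y + \<alpha> *\<^sub>R (chi a - chi b)) = ereal (MM C1 y + \<alpha> * s)) \<and>
        (\<forall>\<alpha>\<ge>0. ereal (MM C1 y + \<alpha> * s) \<le> f (y + \<alpha> *\<^sub>R (chi a - chi b)))"
    then obtain s \<delta> where d: "\<delta> > 0" and s: "DDv f y (chi a - chi b) = ereal s"
      and fl: "\<And>\<alpha>. \<alpha>\<in>{0..\<delta>} \<Longrightarrow> f (y + \<alpha> *\<^sub>R (chi a - chi b)) = ereal (MM C1 y + \<alpha> * s)" by blast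
    have sph: "ph < s" using Dab s by (simp add: dderiv_DDv)
    define \<epsilon> where "\<epsilon> = min \<epsilon>0 (min \<delta> (min (z$a - y$a) (y$b - z$b)))"
    have ep: "\<epsilon> > 0" "\<epsilon> \<le> \<epsilon>0" "\<epsilon> \<le> \<delta>" "\<epsilon> \<le> z$a - y$a" "\<epsilon> \<le> y$b - z$b"
      using e0 d za zb by (auto simp: \<epsilon>_def)
    define z' where "z' = z - \<epsilon> *\<^sub>R (chi a - chi b)"
    have ex1: "f z' + ereal (MM C1 y + \<epsilon> * s) \<le> ereal (MM C1 z + MM C1 y)"
      using ex[of \<epsilon>] ep fl[of \<epsilon>] fsum by (simp add: z'_def)
    have z'P: "z' \<in> PP C0"
    proof (rule ccontr)
      assume "z' \<notin> PP C0" thus False using ex1 f_out[of z'] by simp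
    qed
    have K: "ereal (MM C1 y + ph * n1 (z' - y) / 2) \<le> f z'" by (rule K1'[OF g ph])
    have z'c: "z'$k = (if k = a then z$k - \<epsilon> else if k = b then z$k + \<epsilon> else z$k)" for k
      using ab by (auto simp: z'_def)
    have nz: "n1 (z' - y) = n1 (z - y) - 2*\<epsilon>"
      unfolding n1_def
      by (subst sum_two[OF ab, where h="\<lambda>k. \<bar>(z - y)$k\<bar>"]) (use za zb ep in \<open>auto simp: z'c\<close>)
    have "MM C1 y + ph * n1 (z' - y) / 2 + (MM C1 y + \<epsilon> * s) \<le> MM C1 z + MM C1 y"
      using ex1 K f_in[OF z'P] by simp
    hence "MM C1 y + ph * n1 (z - y) / 2 + \<epsilon> * (s - ph) \<le> MM C1 z"
      unfolding nz by (simp add: algebra_simps diff_divide_distrib)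
    moreover have "\<epsilon> * (s - ph) > 0" using ep sph by simp
    ultimately show ?thesis using f_in[OF zP] by simp
  qed
qed

end



locale msetMB = msetM +
  assumes bnd: "bounded (PP C0)"
begin

lemma pred_eq: "f u - ereal m = ereal (l * s) \<longleftrightarrow> f u = ereal (m + l * s)"
  using rep[of u] by (cases "f u") (auto simp: algebra_simps)

lemma CB:
  assumes y: "y \<in> PP C0" and ab: "a \<noteq> b" and Ds: "dderiv f y a b = ereal s"
  shows "cbar f y a b > 0 \<and> f (y + cbar f y a b *\<^sub>R (chi a - chi b)) = ereal (MM C1 y + cbar f y a b * s)
     \<and> (\<forall>l. l \<ge> 0 \<and> f (y + l *\<^sub>R (chi a - chi b)) = ereal (MM C1 y + l * s) \<longrightarrow> l \<le> cbar f y a b)"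
proof -
  define e where "e = chi a - chi b"
  define m where "m = MM C1 y"
  from DD[OF y, of e] obtain \<delta> where d: "\<delta> > 0"
    and fl: "\<And>\<alpha>. \<alpha>\<in>{0..\<delta>} \<Longrightarrow> f (y + \<alpha> *\<^sub>R e) = ereal (m + \<alpha> * s)"
    and conv: "\<And>\<alpha>. \<alpha> \<ge> 0 \<Longrightarrow> ereal (m + \<alpha> * s) \<le> f (y + \<alpha> *\<^sub>R e)"
    using Ds unfolding dderiv_DDv e_def[symmetric] m_def[symmetric] by auto
  define S where "S = {l. 0 \<le> l \<and> f (y + l *\<^sub>R e) = ereal (m + l * s)}"
  have Seq: "S = {0..} \<inter> ((\<lambda>l. y + l *\<^sub>R e) -` PP C0) \<inter>
       (\<Inter>ab\<in>C1. {l. fst ab \<bullet> (y + l *\<^sub>R e) + snd ab \<le> m + l * s})"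
  proof (intro equalityI subsetI)
    fix l assume "l \<in> S"
    hence l: "0 \<le> l" "f (y + l *\<^sub>R e) = ereal (m + l * s)" by (auto simp: S_def)
    hence P: "y + l *\<^sub>R e \<in> PP C0" using f_out by force
    hence "MM C1 (y + l *\<^sub>R e) \<le> m + l * s" using l f_in by simp
    thus "l \<in> {0..} \<inter> ((\<lambda>l. y + l *\<^sub>R e) -` PP C0) \<inter>
       (\<Inter>ab\<in>C1. {l. fst ab \<bullet> (y + l *\<^sub>R e) + snd ab \<le> m + l * s})"
      using l P MM_le_iff[OF fin1 ne1] by auto
  next
    fix l assume l: "l \<in> {0..} \<inter> ((\<lambda>l. y + l *\<^sub>R e) -` PP C0) \<inter>
       (\<Inter>ab\<in>C1. {l. fst ab \<bullet> (y + l *\<^sub>R e) + snd ab \<le> m + l * s})"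
    hence P: "y + l *\<^sub>R e \<in> PP C0" and l0: "0 \<le> l" by auto
    have "MM C1 (y + l *\<^sub>R e) \<le> m + l * s" using l MM_le_iff[OF fin1 ne1] by auto
    moreover have "m + l * s \<le> MM C1 (y + l *\<^sub>R e)" using conv[OF l0] f_in[OF P] by simp
    ultimately show "l \<in> S" using l0 f_in[OF P] by (simp add: S_def)
  qed
  have cl: "closed S" unfolding Seq
    by (intro closed_Int closed_atLeast closed_vimage closed_PP closed_INT ballI closed_Collect_le continuous_intros)
  obtain K where K: "\<And>x. x \<in> PP C0 \<Longrightarrow> norm x \<le> K" using bnd unfolding bounded_iff by blast
  have "e $ a = 1" using ab by (simp add: e_def)
  hence "e \<noteq> 0" by auto
  hence ne: "norm e > 0" by simp
  have "bounded S" unfolding bounded_iff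
  proof (intro exI ballI)
    fix l assume "l \<in> S"
    hence P: "y + l *\<^sub>R e \<in> PP C0" using Seq by auto
    have "\<bar>l\<bar> * norm e = norm (l *\<^sub>R e)" by simp
    also have "\<dots> \<le> norm (y + l *\<^sub>R e) + norm y" using norm_triangle_ineq4[of "y + l *\<^sub>R e" y] by simp
    also have "\<dots> \<le> K + norm y" using K[OF P] by simp
    finally show "norm l \<le> (K + norm y) / norm e" using ne by (simp add: le_divide_eq)
  qed
  hence cS: "compact S" using cl by (simp add: compact_eq_bounded_closed)
  have dS: "\<delta> \<in> S" using fl[of \<delta>] d by (simp add: S_def)
  obtain c where cS': "c \<in> S" and cmax: "\<And>t. t \<in> S \<Longrightarrow> t \<le> c"
    using compact_attains_sup[OF cS] dS by blast
  have fy: "f y = ereal m" using f_in[OF y] by (simp add: m_def)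
  have "cbar f y a b = c" unfolding cbar_def
  proof (rule Greatest_equality)
    show "0 \<le> c \<and> f (y + c *\<^sub>R (chi a - chi b)) - f y = ereal c * dderiv f y a b"
      using cS' by (simp add: S_def fy Ds pred_eq e_def)
    fix l assume "0 \<le> l \<and> f (y + l *\<^sub>R (chi a - chi b)) - f y = ereal l * dderiv f y a b"
    hence "l \<in> S" by (simp add: S_def fy Ds pred_eq e_def)
    thus "l \<le> c" by (rule cmax)
  qed
  moreover have "c > 0" using cmax[OF dS] d by simp
  ultimately show ?thesis using cS' cmax unfolding S_def e_def m_def by auto
qed

end



context msetMB
begin

lemma DDfin:
  assumes "y \<in> PP C0" "dderiv f y a b = ereal s"
  obtains \<delta> where "\<delta> > 0" "\<And>\<alpha>. \<alpha>\<in>{0..\<delta>} \<Longrightarrow> f (y + \<alpha> *\<^sub>R (chi a - chi b)) = ereal (MM C1 y + \<alpha> * s)"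
  using DD[OF assms(1), of "chi a - chi b"] assms(2) unfolding dderiv_DDv by auto

lemma dd_notinf: "y \<in> PP C0 \<Longrightarrow> dderiv f y a b \<noteq> -\<infinity>"
  using DD[of y "chi a - chi b"] unfolding dderiv_DDv by auto

lemma n1_two: "n1 (c *\<^sub>R (chi a - chi b) + \<alpha> *\<^sub>R (chi k - chi l)) \<le> 2 * c + 2 * \<alpha>"
  if "c \<ge> 0" "\<alpha> \<ge> 0" for c \<alpha>
  using n1_add[of "c *\<^sub>R (chi a - chi b)" "\<alpha> *\<^sub>R (chi k - chi l)"] n1_e[of c a b] n1_e[of \<alpha> k l] that
  by simp

lemma S1:
  assumes g: "ge y ph" and ph: "ph < 0" and D: "dderiv f y a b = ereal ph"
  shows "a \<noteq> b \<and> cbar f y a b > 0 \<and> (y + cbar f y a b *\<^sub>R (chi a - chi b)) \<in> PP C0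
    \<and> MM C1 (y + cbar f y a b *\<^sub>R (chi a - chi b)) = MM C1 y + cbar f y a b * ph
    \<and> ge (y + cbar f y a b *\<^sub>R (chi a - chi b)) ph
    \<and> dderiv f (y + cbar f y a b *\<^sub>R (chi a - chi b)) a b > ereal ph"
proof -
  have y: "y \<in> PP C0" using g by (simp add: ge_def)
  have ab: "a \<noteq> b"
  proof
    assume "a = b" thus False using dd_self[OF y, of a] D ph by simp
  qed
  define c where "c = cbar f y a b"
  define y' where "y' = y + c *\<^sub>R (chi a - chi b)"
  from CB[OF y ab D] have c0: "c > 0" and fy': "f y' = ereal (MM C1 y + c * ph)"
    and cmax: "\<And>l. l \<ge> 0 \<Longrightarrow> f (y + l *\<^sub>R (chi a - chi b)) = ereal (MM C1 y + l * ph) \<Longrightarrow> l \<le> c"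
    unfolding c_def[symmetric] y'_def[symmetric] by auto
  have y'P: "y' \<in> PP C0" using fy' f_out by force
  have MMy': "MM C1 y' = MM C1 y + c * ph" using fy' f_in[OF y'P] by simp
  have ge': "ge y' ph" unfolding ge_def
  proof (intro conjI allI y'P)
    fix k l
    show "ereal ph \<le> dderiv f y' k l"
    proof (cases "dderiv f y' k l")
      case PInf thus ?thesis by simp
    next
      case MInf thus ?thesis using dd_notinf[OF y'P] by simp
    next
      case (real s')
      from DDfin[OF y'P this] obtain \<delta> where d: "\<delta> > 0"
        and fl: "\<And>\<alpha>. \<alpha>\<in>{0..\<delta>} \<Longrightarrow> f (y' + \<alpha> *\<^sub>R (chi k - chi l)) = ereal (MM C1 y' + \<alpha> * s')" by blast
      define z where "z = y' + \<delta> *\<^sub>R (chi k - chi l)"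
      have fz: "f z = ereal (MM C1 y + c * ph + \<delta> * s')" using fl[of \<delta>] d MMy' by (simp add: z_def)
      have "ereal (MM C1 y + ph * n1 (z - y) / 2) \<le> f z" using K1'[OF g] ph by simp
      hence K: "MM C1 y + ph * n1 (z - y) / 2 \<le> MM C1 y + c * ph + \<delta> * s'" using fz by simp
      have zy: "z - y = c *\<^sub>R (chi a - chi b) + \<delta> *\<^sub>R (chi k - chi l)" by (simp add: z_def y'_def)
      have "n1 (z - y) \<le> 2 * c + 2 * \<delta>" unfolding zy by (rule n1_two) (use c0 d in auto)
      hence "ph * (2 * c + 2 * \<delta>) \<le> ph * n1 (z - y)" using ph by (intro mult_left_mono_neg) auto
      hence h: "ph * c + ph * \<delta> \<le> ph * n1 (z - y) / 2" by (simp add: distrib_left)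
      have "\<delta> * ph \<le> \<delta> * s'" using K h by (simp add: mult.commute)
      hence "ph \<le> s'" using d by simp
      thus ?thesis using real by simp
    qed
  qed
  have strict: "dderiv f y' a b > ereal ph"
  proof -
    have le: "ereal ph \<le> dderiv f y' a b" using ge' by (simp add: ge_def)
    have "dderiv f y' a b \<noteq> ereal ph"
    proof
      assume "dderiv f y' a b = ereal ph"
      from DDfin[OF y'P this] obtain \<delta> where d: "\<delta> > 0"
        and fl: "\<And>\<alpha>. \<alpha>\<in>{0..\<delta>} \<Longrightarrow> f (y' + \<alpha> *\<^sub>R (chi a - chi b)) = ereal (MM C1 y' + \<alpha> * ph)" by blast
      have eq: "y + (c + \<delta>) *\<^sub>R (chi a - chi b) = y' + \<delta> *\<^sub>R (chi a - chi b)"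
        by (simp add: y'_def algebra_simps)
      have "f (y + (c + \<delta>) *\<^sub>R (chi a - chi b)) = ereal (MM C1 y' + \<delta> * ph)"
        unfolding eq using fl[of \<delta>] d by simp
      also have "\<dots> = ereal (MM C1 y + (c + \<delta>) * ph)" by (simp add: MMy' algebra_simps)
      finally have "f (y + (c + \<delta>) *\<^sub>R (chi a - chi b)) = ereal (MM C1 y + (c + \<delta>) * ph)" .
      from cmax[OF _ this] c0 d show False by simp
    qed
    thus ?thesis using le by simp
  qed
  show ?thesis using ab c0 y'P MMy' ge' strict unfolding c_def y'_def by auto
qed

lemma strict_from:
  assumes g': "ge y' ph" and MMy': "MM C1 y' = MM C1 y + c * ph" and c0: "c > 0"
    and H: "\<And>\<alpha>. 0 < \<alpha> \<Longrightarrow> \<alpha> \<le> c \<Longrightarrow> ereal (MM C1 y + (c + \<alpha>) * ph) < f (y' + \<alpha> *\<^sub>R (chi r - chi k))"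
  shows "dderiv f y' r k > ereal ph"
proof -
  have y'P: "y' \<in> PP C0" and le: "ereal ph \<le> dderiv f y' r k" using g' by (auto simp: ge_def)
  have "dderiv f y' r k \<noteq> ereal ph"
  proof
    assume "dderiv f y' r k = ereal ph"
    from DDfin[OF y'P this] obtain \<delta> where d: "\<delta> > 0"
      and fl: "\<And>\<alpha>. \<alpha>\<in>{0..\<delta>} \<Longrightarrow> f (y' + \<alpha> *\<^sub>R (chi r - chi k)) = ereal (MM C1 y' + \<alpha> * ph)" by blast
    define \<alpha> where "\<alpha> = min \<delta> c"
    have a: "0 < \<alpha>" "\<alpha> \<le> c" "\<alpha> \<le> \<delta>" using d c0 by (auto simp: \<alpha>_def)
    have "f (y' + \<alpha> *\<^sub>R (chi r - chi k)) = ereal (MM C1 y + (c + \<alpha>) * ph)"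
      using fl[of \<alpha>] a MMy' by (simp add: algebra_simps)
    with H[OF a(1,2)] show False by simp
  qed
  thus ?thesis using le by simp
qed

lemma caseA:
  assumes g: "ge y ph" and ph: "ph < 0" and c0: "c > 0" and a: "0 < \<alpha>" "\<alpha> \<le> c"
  shows "ereal (MM C1 y + (c + \<alpha>) * ph) < f (y + c *\<^sub>R (chi a - chi b) + \<alpha> *\<^sub>R (chi b - chi k))"
proof -
  define z where "z = y + c *\<^sub>R (chi a - chi b) + \<alpha> *\<^sub>R (chi b - chi k)"
  have "z - y = (c - \<alpha>) *\<^sub>R (chi a - chi b) + \<alpha> *\<^sub>R (chi a - chi k)"
    by (simp add: z_def algebra_simps)
  hence "n1 (z - y) \<le> 2 * (c - \<alpha>) + 2 * \<alpha>" using n1_two[of "c - \<alpha>" \<alpha> a b a k] a by simp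
  hence h1: "ph * c \<le> ph * n1 (z - y) / 2" using ph by (simp add: mult_left_mono_neg)
  have K: "ereal (MM C1 y + ph * n1 (z - y) / 2) \<le> f z" using K1'[OF g] ph by simp
  have h2: "(c + \<alpha>) * ph < ph * c" using mult_pos_neg[OF a(1) ph] by (simp add: algebra_simps)
  have "MM C1 y + (c + \<alpha>) * ph < MM C1 y + ph * n1 (z - y) / 2" using h1 h2 by linarith
  hence "ereal (MM C1 y + (c + \<alpha>) * ph) < ereal (MM C1 y + ph * n1 (z - y) / 2)" by simp
  from order_less_le_trans[OF this K] have "ereal (MM C1 y + (c + \<alpha>) * ph) < f z" .
  thus ?thesis by (simp add: z_def)
qed

lemma caseB:
  assumes g: "ge y ph" and ph: "ph < 0" and c0: "c > 0" and a: "0 < \<alpha>"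
    and r: "r \<noteq> a" "r \<noteq> b" "r \<noteq> k" and row: "\<And>j. dderiv f y r j > ereal ph"
  shows "ereal (MM C1 y + (c + \<alpha>) * ph) < f (y + c *\<^sub>R (chi a - chi b) + \<alpha> *\<^sub>R (chi r - chi k))"
proof -
  define z where "z = y + c *\<^sub>R (chi a - chi b) + \<alpha> *\<^sub>R (chi r - chi k)"
  have y: "y \<in> PP C0" using g by (simp add: ge_def)
  show ?thesis
  proof (cases "z \<in> PP C0")
    case False thus ?thesis using f_out by (simp add: z_def)
  next
    case True
    have zr: "z$r > y$r" using r a by (simp add: z_def)
    from exch[OF True y zr] obtain j \<epsilon>0 where zj: "z$j < y$j" and e0: "\<epsilon>0 > 0"
      and ex: "\<And>\<epsilon>. \<epsilon>\<in>{0..\<epsilon>0} \<Longrightarrow> f z + f y \<ge> f (z - \<epsilon> *\<^sub>R (chi r - chi j)) + f (y + \<epsilon> *\<^sub>R (chi r - chi j))"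
      by blast
    have C: "ereal (MM C1 y + ph * n1 (z - y) / 2) < f z"
      by (rule Core[OF g _ zr zj row e0 ex]) (use ph in auto)
    have "n1 (z - y) \<le> 2 * c + 2 * \<alpha>" using n1_two[of c \<alpha> a b r k] c0 a by (simp add: z_def)
    hence "ph * (c + \<alpha>) \<le> ph * n1 (z - y) / 2" using ph by (simp add: mult_left_mono_neg)
    hence "ereal (MM C1 y + (c + \<alpha>) * ph) \<le> ereal (MM C1 y + ph * n1 (z - y) / 2)" by (simp add: mult.commute)
    from order_le_less_trans[OF this C] show ?thesis by (simp add: z_def)
  qed
qed

lemma caseC:
  assumes g: "ge y ph" and ph: "ph < 0" and c0: "c > 0" and a: "0 < \<alpha>" and ab: "a \<noteq> b"
    and k: "k \<noteq> a" "k \<noteq> b" and Dak: "dderiv f y a k > ereal ph"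
  shows "ereal (MM C1 y + (c + \<alpha>) * ph) < f (y + c *\<^sub>R (chi a - chi b) + \<alpha> *\<^sub>R (chi a - chi k))"
proof -
  define z where "z = y + c *\<^sub>R (chi a - chi b) + \<alpha> *\<^sub>R (chi a - chi k)"
  have y: "y \<in> PP C0" using g by (simp add: ge_def)
  show ?thesis
  proof (cases "z \<in> PP C0")
    case False thus ?thesis using f_out by (simp add: z_def)
  next
    case True
    have zk: "y$k > z$k" using k a by (simp add: z_def)
    have za: "z$a > y$a" using k a ab c0 by (simp add: z_def)
    from exch[OF y True zk] obtain j \<epsilon>0 where yj: "y$j < z$j" and e0: "\<epsilon>0 > 0"
      and ex: "\<And>\<epsilon>. \<epsilon>\<in>{0..\<epsilon>0} \<Longrightarrow> f y + f z \<ge> f (y - \<epsilon> *\<^sub>R (chi k - chi j)) + f (z + \<epsilon> *\<^sub>R (chi k - chi j))"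
      by blast
    have ja: "j = a"
    proof (rule ccontr)
      assume "j \<noteq> a"
      hence "z$j \<le> y$j" using c0 a by (auto simp: z_def)
      thus False using yj by simp
    qed
    have ex': "f z + f y \<ge> f (z - \<epsilon> *\<^sub>R (chi a - chi k)) + f (y + \<epsilon> *\<^sub>R (chi a - chi k))"
      if "\<epsilon>\<in>{0..\<epsilon>0}" for \<epsilon>
    proof -
      have "y - \<epsilon> *\<^sub>R (chi k - chi a) = y + \<epsilon> *\<^sub>R (chi a - chi k)"
        "z + \<epsilon> *\<^sub>R (chi k - chi a) = z - \<epsilon> *\<^sub>R (chi a - chi k)" by (simp_all add: algebra_simps)
      thus ?thesis using ex[OF that] ja by (simp add: add.commute)
    qed
    have C: "ereal (MM C1 y + ph * n1 (z - y) / 2) < f z"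
      by (rule Core[OF g _ za zk Dak e0 ex']) (use ph in auto)
    have "n1 (z - y) \<le> 2 * c + 2 * \<alpha>" using n1_two[of c \<alpha> a b a k] c0 a by (simp add: z_def)
    hence "ph * (c + \<alpha>) \<le> ph * n1 (z - y) / 2" using ph by (simp add: mult_left_mono_neg)
    hence "ereal (MM C1 y + (c + \<alpha>) * ph) \<le> ereal (MM C1 y + ph * n1 (z - y) / 2)" by (simp add: mult.commute)
    from order_le_less_trans[OF this C] show ?thesis by (simp add: z_def)
  qed
qed

end



context msetMB
begin

lemma step:
  assumes g: "ge y ph" and ph: "ph < 0" and R: "\<forall>r\<in>R. \<forall>k. dderiv f y r k > ereal ph"
    and iR: "i \<notin> R" and P: "\<forall>k\<in>P. dderiv f y i k > ereal ph"
  shows "ge (pm_step f (ereal ph) y (i,j)) ph \<and> (\<forall>r\<in>R. \<forall>k. dderiv f (pm_step f (ereal ph) y (i,j)) r k > ereal ph)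
    \<and> (\<forall>k\<in>insert j P. dderiv f (pm_step f (ereal ph) y (i,j)) i k > ereal ph)"
proof (cases "dderiv f y i j = ereal ph")
  case False
  hence "pm_step f (ereal ph) y (i,j) = y" by (simp add: pm_step_def)
  moreover have "dderiv f y i j > ereal ph" using False g by (auto simp: ge_def order_less_le)
  ultimately show ?thesis using g R P by auto
next
  case True
  define c where "c = cbar f y i j"
  define y' where "y' = y + c *\<^sub>R (chi i - chi j)"
  have ps: "pm_step f (ereal ph) y (i,j) = y'" using True by (simp add: pm_step_def y'_def c_def)
  from S1[OF g ph True] have ij: "i \<noteq> j" and c0: "c > 0" and y'P: "y' \<in> PP C0"
    and MMy': "MM C1 y' = MM C1 y + c * ph" and g': "ge y' ph" and st: "dderiv f y' i j > ereal ph"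
    unfolding c_def[symmetric] y'_def[symmetric] by auto
  have rows: "dderiv f y' r k > ereal ph" if r: "r \<in> R" for r k
  proof -
    have ri: "r \<noteq> i" using r iR by auto
    show ?thesis
    proof (cases "k = r")
      case True thus ?thesis using dd_self[OF y'P] ph by simp
    next
      case kr: False
      show ?thesis
      proof (rule strict_from[OF g' MMy' c0])
        fix \<alpha> :: real assume a: "0 < \<alpha>" "\<alpha> \<le> c"
        show "ereal (MM C1 y + (c + \<alpha>) * ph) < f (y' + \<alpha> *\<^sub>R (chi r - chi k))"
        proof (cases "r = j")
          case True thus ?thesis unfolding y'_def using caseA[OF g ph c0 a, of i j k] by simp
        next
          case False
          thus ?thesis unfolding y'_def using caseB[OF g ph c0 a(1), of r i j k] ri kr R r by auto
        qed
      qed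
    qed
  qed
  have rowi: "dderiv f y' i k > ereal ph" if k: "k \<in> insert j P" for k
  proof (cases "k = j")
    case True thus ?thesis using st by simp
  next
    case kj: False
    show ?thesis
    proof (cases "k = i")
      case True thus ?thesis using dd_self[OF y'P] ph by simp
    next
      case ki: False
      have kP: "dderiv f y i k > ereal ph" using k kj P by auto
      show ?thesis
      proof (rule strict_from[OF g' MMy' c0])
        fix \<alpha> :: real assume a: "0 < \<alpha>" "\<alpha> \<le> c"
        show "ereal (MM C1 y + (c + \<alpha>) * ph) < f (y' + \<alpha> *\<^sub>R (chi i - chi k))"
          unfolding y'_def using caseC[OF g ph c0 a(1) ij ki kj kP] by simp
      qed
    qed
  qed
  show ?thesis unfolding ps using g' rows rowi by auto
qed

lemma inner:
  assumes "ge y ph" "ph < 0" "\<forall>r\<in>R. \<forall>k. dderiv f y r k > ereal ph" "i \<notin> R"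
    "\<forall>k\<in>P. dderiv f y i k > ereal ph"
  shows "ge (foldl (pm_step f (ereal ph)) y (map (\<lambda>j. (i,j)) js)) ph \<and>
    (\<forall>r\<in>R. \<forall>k. dderiv f (foldl (pm_step f (ereal ph)) y (map (\<lambda>j. (i,j)) js)) r k > ereal ph) \<and>
    (\<forall>k\<in>P \<union> set js. dderiv f (foldl (pm_step f (ereal ph)) y (map (\<lambda>j. (i,j)) js)) i k > ereal ph)"
  using assms
proof (induction js arbitrary: y P)
  case Nil thus ?case by simp
next
  case (Cons j js)
  from step[OF Cons.prems(1,2,3,4,5), of j] have
    "ge (pm_step f (ereal ph) y (i,j)) ph"
    "\<forall>r\<in>R. \<forall>k. dderiv f (pm_step f (ereal ph) y (i,j)) r k > ereal ph"
    "\<forall>k\<in>insert j P. dderiv f (pm_step f (ereal ph) y (i,j)) i k > ereal ph" by auto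
  from Cons.IH[OF this(1) Cons.prems(2) this(2) Cons.prems(4) this(3)] show ?case by auto
qed

lemma outer:
  assumes "ge y ph" "ph < 0" "\<forall>r\<in>R. \<forall>k. dderiv f y r k > ereal ph" "set ois \<inter> R = {}"
    "distinct ois" "\<And>i. set (js i) = UNIV - {i}"
  shows "ge (foldl (pm_step f (ereal ph)) y (concat (map (\<lambda>i. map (\<lambda>j. (i, j)) (js i)) ois))) ph \<and>
    (\<forall>r\<in>R \<union> set ois. \<forall>k. dderiv f (foldl (pm_step f (ereal ph)) y (concat (map (\<lambda>i. map (\<lambda>j. (i, j)) (js i)) ois))) r k > ereal ph)"
  using assms
proof (induction ois arbitrary: y R)
  case Nil thus ?case by simp
next
  case (Cons i ois)
  define y1 where "y1 = foldl (pm_step f (ereal ph)) y (map (\<lambda>j. (i,j)) (js i))"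
  have iR: "i \<notin> R" using Cons.prems(4) by auto
  from inner[OF Cons.prems(1,2,3) iR, of "{}" "js i"] have
    g1: "ge y1 ph" and R1: "\<forall>r\<in>R. \<forall>k. dderiv f y1 r k > ereal ph"
    and i1: "\<forall>k\<in>set (js i). dderiv f y1 i k > ereal ph" unfolding y1_def by auto
  have y1P: "y1 \<in> PP C0" using g1 by (simp add: ge_def)
  have "\<forall>k. dderiv f y1 i k > ereal ph"
  proof
    fix k show "dderiv f y1 i k > ereal ph"
    proof (cases "k = i")
      case True thus ?thesis using dd_self[OF y1P] Cons.prems(2) by simp
    next
      case False thus ?thesis using i1 Cons.prems(6)[of i] by auto
    qed
  qed
  hence R2: "\<forall>r\<in>insert i R. \<forall>k. dderiv f y1 r k > ereal ph" using R1 by auto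
  have "set ois \<inter> insert i R = {}" using Cons.prems(4,5) by auto
  from Cons.IH[OF g1 Cons.prems(2) R2 this _ Cons.prems(6)] Cons.prems(5)
  show ?case by (simp add: y1_def foldl_append)
qed

end

theorem mainTheorem17:
  fixes f :: "real^'n::finite \<Rightarrow> ereal" and x :: "real^'n"
    and ois :: "'n list" and js :: "'n \<Rightarrow> 'n list"
  assumes "M_convex f"
    and "bounded (dom_R f)"
    and "x \<in> dom_R f"
    and "phi f x < 0"
    and "distinct ois" and "set ois = UNIV"
    and "\<And>i. distinct (js i) \<and> set (js i) = UNIV - {i}"
  shows "phi f (pm_incslope f ois js x) > phi f x"
proof -
  have pc: "polyhedral_convex f" using assms(1) by (simp add: M_convex_def)
  from repr[OF pc] obtain C0 C1 where fin: "finite C0" "finite C1" "C1 \<noteq> {}"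
    and rp: "\<And>x. f x = (if x \<in> PP C0 then ereal (MM C1 x) else \<infinity>)" by blast
  interpret mset f C0 C1 using fin rp by unfold_locales auto
  interpret msetM f C0 C1 using assms(1) by unfold_locales
  interpret msetMB f C0 C1 using assms(2) dom_eq by unfold_locales simp
  have xP: "x \<in> PP C0" using assms(3) dom_eq by simp
  define S where "S y = {dderiv f y i j | i j. True}" for y
  have S_img: "S y = (\<lambda>(i,j). dderiv f y i j) ` UNIV" for y unfolding S_def by auto
  have finS: "finite (S y)" "S y \<noteq> {}" for y unfolding S_img by auto
  have phiS: "phi f y = Min (S y)" for y unfolding phi_def S_def ..
  have "phi f x \<in> S x" unfolding phiS using finS by (rule Min_in)
  then obtain i0 j0 where ph0: "phi f x = dderiv f x i0 j0" unfolding S_def by auto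
  have "phi f x \<noteq> -\<infinity>" using ph0 dd_notinf[OF xP] by simp
  moreover have "phi f x \<noteq> \<infinity>" using assms(4) by auto
  ultimately obtain ph where ph: "phi f x = ereal ph" by (cases "phi f x") auto
  have ph0': "ph < 0" using assms(4) ph by simp
  have gx: "ge x ph" unfolding ge_def
  proof (intro conjI allI xP)
    fix k l have "phi f x \<le> dderiv f x k l" unfolding phiS using finS by (intro Min_le) (auto simp: S_def)
    thus "ereal ph \<le> dderiv f x k l" using ph by simp
  qed
  define x' where "x' = pm_incslope f ois js x"
  have "\<forall>r\<in>{} \<union> set ois. \<forall>k. dderiv f x' r k > ereal ph"
    using outer[OF gx ph0', of "{}" ois js] assms(5,7) unfolding x'_def pm_incslope_def ph by auto
  hence all: "\<forall>r k. dderiv f x' r k > ereal ph" using assms(6) by auto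
  have "ereal ph < Min (S x')" using finS all by (subst Min_gr_iff) (auto simp: S_def)
  thus ?thesis unfolding x'_def[symmetric] phiS[symmetric] ph .
qed


end
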